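(* Let $S$ be a topological semigroup with an open right unit, and let $\chi(S)$ be its character. Then the topology of $S$ is generated by a family $\mathcal D$ of left-subinvariant $\overline{\mathsf{dist}}$-continuous quasi-pseudometrics with $|\mathcal D|\le\chi(S)$. If moreover $S$ is semiregular, the quasi-pseudometrics in $\mathcal D$ can additionally be chosen right-continuous.
   Context: A topological semigroup is a topological space with continuous associative multiplication; $e$ is an open right unit if $xe=x$ for all $x$ and $xV$ is a neighborhood of $x$ for every neighborhood $V$ of $e$ and every $x$. $\chi(S)$ is the least cardinal $\kappa$ such that every point has a neighborhood base of cardinality $\le\kappa$. Semiregular: every neighborhood $O_x$ of $x$ contains $\mathrm{int}\,\overline{U_x}$ for some neighborhood $U_x$ of $x$. A quasi-pseudometric is $d:S\times S\to[0,\infty)$ with $d(x,x)=0$ and the triangle inequality; left-subinvariant if $d(zx,zy)\le d(x,y)$ for all $x,y,z$; right-continuous if $y\mapsto d(x,y)$ is continuous for each $x$; $\overline{\mathsf{dist}}$-continuous if for every non-empty $A\subset S$ the function $x\mapsto\inf\{\varepsilon>0:x\in\overline{B_d(A,\varepsilon)}\}$ is continuous, where $B_d(A,\varepsilon)=\{y:\exists a\in A\ d(a,y)<\varepsilon\}$. A family $\mathcal D$ generates the topology if $\{B_d(x,\varepsilon):d\in\mathcal D,x\in S,\varepsilon>0\}$ is a subbase of it, where $B_d(x,\varepsilon)=\{y:d(x,y)<\varepsilon\}$. *)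

theory Defs
  imports "HOL-Analysis.Analysis"
begin

definition topological_semigroup :: "'a::{topological_space,semigroup_mult} itself \<Rightarrow> bool" where
  "topological_semigroup _ \<longleftrightarrow> continuous_on UNIV (\<lambda>p::'a \<times> 'a. fst p * snd p)"

definition is_nbhd :: "'a::topological_space set \<Rightarrow> 'a \<Rightarrow> bool" where
  "is_nbhd V x \<longleftrightarrow> (\<exists>U. open U \<and> x \<in> U \<and> U \<subseteq> V)"

definition open_right_unit :: "'a::{topological_space,semigroup_mult} \<Rightarrow> bool" where
  "open_right_unit e \<longleftrightarrow> (\<forall>x. x * e = x) \<and>
     (\<forall>V x. is_nbhd V e \<longrightarrow> is_nbhd ((\<lambda>v. x * v) ` V) x)"

definition nbhd_base :: "'a::topological_space \<Rightarrow> 'a set set \<Rightarrow> bool" where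
  "nbhd_base x B \<longleftrightarrow> (\<forall>V\<in>B. is_nbhd V x) \<and> (\<forall>W. is_nbhd W x \<longrightarrow> (\<exists>V\<in>B. V \<subseteq> W))"

text \<open>card D \<le> chi(S), where chi(S) is the least cardinal k such that every point has a
  neighbourhood base of cardinality at most k. Since chi(S) is at most the cardinality of
  the power set of S, it is represented by some K :: 'a set set, so the inequality is
  equivalent to: card D \<le> card K for every K bounding the size of some neighbourhood base
  at every point.\<close>
definition card_le_character :: "'b set \<Rightarrow> 'a::topological_space itself \<Rightarrow> bool" where
  "card_le_character D _ \<longleftrightarrow>
     (\<forall>K :: 'a set set. (\<forall>x::'a. \<exists>B. nbhd_base x B \<and> (card_of B, card_of K) \<in> ordLeq)
        \<longrightarrow> (card_of D, card_of K) \<in> ordLeq)"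

definition semiregular :: "'a::topological_space itself \<Rightarrow> bool" where
  "semiregular _ \<longleftrightarrow> (\<forall>(x::'a) W. is_nbhd W x \<longrightarrow>
      (\<exists>U. is_nbhd U x \<and> interior (closure U) \<subseteq> W))"

definition quasi_pseudometric :: "('a \<Rightarrow> 'a \<Rightarrow> real) \<Rightarrow> bool" where
  "quasi_pseudometric d \<longleftrightarrow> (\<forall>x y. d x y \<ge> 0) \<and> (\<forall>x. d x x = 0) \<and>
     (\<forall>x y z. d x z \<le> d x y + d y z)"

definition left_subinvariant :: "('a::semigroup_mult \<Rightarrow> 'a \<Rightarrow> real) \<Rightarrow> bool" where
  "left_subinvariant d \<longleftrightarrow> (\<forall>x y z. d (z * x) (z * y) \<le> d x y)"

definition right_continuous :: "('a::topological_space \<Rightarrow> 'a \<Rightarrow> real) \<Rightarrow> bool" where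
  "right_continuous d \<longleftrightarrow> (\<forall>x. continuous_on UNIV (d x))"

definition qball :: "('a \<Rightarrow> 'a \<Rightarrow> real) \<Rightarrow> 'a \<Rightarrow> real \<Rightarrow> 'a set" where
  "qball d x \<epsilon> = {y. d x y < \<epsilon>}"

definition qball_set :: "('a \<Rightarrow> 'a \<Rightarrow> real) \<Rightarrow> 'a set \<Rightarrow> real \<Rightarrow> 'a set" where
  "qball_set d A \<epsilon> = {y. \<exists>a\<in>A. d a y < \<epsilon>}"

definition closure_dist :: "('a::topological_space \<Rightarrow> 'a \<Rightarrow> real) \<Rightarrow> 'a set \<Rightarrow> 'a \<Rightarrow> real" where
  "closure_dist d A x = Inf {\<epsilon>. \<epsilon> > 0 \<and> x \<in> closure (qball_set d A \<epsilon>)}"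

definition closure_dist_continuous :: "('a::topological_space \<Rightarrow> 'a \<Rightarrow> real) \<Rightarrow> bool" where
  "closure_dist_continuous d \<longleftrightarrow> (\<forall>A. A \<noteq> {} \<longrightarrow> continuous_on UNIV (closure_dist d A))"

definition generates_topology :: "('a::topological_space \<Rightarrow> 'a \<Rightarrow> real) set \<Rightarrow> bool" where
  "generates_topology D \<longleftrightarrow>
     (\<forall>U. open U \<longleftrightarrow> generate_topology {qball d x \<epsilon> | d x \<epsilon>. d \<in> D \<and> \<epsilon> > 0} U)"

end

theory Submission imports Defs begin

lemma cont_from_semi:
  fixes g :: "'a::topological_space \<Rightarrow> real"
  assumes lo: "\<And>x a. a < g x \<Longrightarrow> \<exists>S. open S \<and> x \<in> S \<and> (\<forall>y\<in>S. a < g y)"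
      and up: "\<And>x a. g x < a \<Longrightarrow> \<exists>S. open S \<and> x \<in> S \<and> (\<forall>y\<in>S. g y < a)"
  shows "continuous_on UNIV g"
proof -
  have "(g \<longlongrightarrow> g x) (at x within UNIV)" for x
  proof (rule order_tendstoI)
    fix a assume "a < g x"
    then obtain S where "open S" "x \<in> S" "\<forall>y\<in>S. a < g y" using lo by blast
    then show "eventually (\<lambda>y. a < g y) (at x within UNIV)"
      unfolding eventually_at_topological by blast
  next
    fix a assume "g x < a"
    then obtain S where "open S" "x \<in> S" "\<forall>y\<in>S. g y < a" using up by blast
    then show "eventually (\<lambda>y. g y < a) (at x within UNIV)"
      unfolding eventually_at_topological by blast
  qed
  then show ?thesis unfolding continuous_on_def by blast
qed

locale tsg =
  fixes e :: "'a::{topological_space,semigroup_mult}"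
  assumes cont: "continuous_on UNIV (\<lambda>p::'a\<times>'a. fst p * snd p)"
    and runit: "\<And>x. x * e = x"
    and onbhd: "\<And>V x. is_nbhd V e \<Longrightarrow> is_nbhd ((\<lambda>v. x * v) ` V) x"
begin

lemma contL: "continuous_on UNIV (\<lambda>y::'a. x * y)"
proof -
  have "continuous_on UNIV (\<lambda>y::'a. (x,y))" by (intro continuous_intros)
  from continuous_on_compose2[OF cont this] show ?thesis by simp
qed

lemma contR: "continuous_on UNIV (\<lambda>y::'a. y * u)"
proof -
  have "continuous_on UNIV (\<lambda>y::'a. (y,u))" by (intro continuous_intros)
  from continuous_on_compose2[OF cont this] show ?thesis by simp
qed

lemma closure_img:
  assumes "continuous_on UNIV f" "y \<in> closure T"
  shows "f y \<in> closure (f ` T)"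
proof -
  have "f ` closure T \<subseteq> closure (f ` T)"
    by (rule image_closure_subset) (use assms closure_subset[of "f ` T"] in \<open>auto intro: continuous_on_subset\<close>)
  then show ?thesis using assms(2) by blast
qed

lemma open_preL: "open T \<Longrightarrow> open {v. (x::'a) * v \<in> T}"
  using open_vimage[OF _ contL[of x], of T] by (simp add: vimage_def)

lemma sq_nbhd:
  assumes "open W" "e \<in> W"
  shows "\<exists>W'. open W' \<and> e \<in> W' \<and> (\<forall>a\<in>W'. \<forall>b\<in>W'. a * b \<in> W)"
proof -
  have "open ((\<lambda>p::'a\<times>'a. fst p * snd p) -` W)"
    using open_vimage[OF assms(1) cont] by simp
  moreover have "(e,e) \<in> (\<lambda>p::'a\<times>'a. fst p * snd p) -` W" using assms runit by simp
  ultimately obtain A B where AB0: "open A" "open B" "(e,e) \<in> A \<times> B"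
    "A \<times> B \<subseteq> (\<lambda>p::'a\<times>'a. fst p * snd p) -` W"
    by (rule open_prod_elim)
  then have AB: "open A" "open B" "e \<in> A" "e \<in> B"
    "A \<times> B \<subseteq> (\<lambda>p::'a\<times>'a. fst p * snd p) -` W" by auto
  have "\<forall>a\<in>A \<inter> B. \<forall>b\<in>A \<inter> B. a * b \<in> W"
  proof (intro ballI)
    fix a b assume "a \<in> A \<inter> B" "b \<in> A \<inter> B"
    then have "(a,b) \<in> A \<times> B" by simp
    then show "a * b \<in> W" using AB(5) by auto
  qed
  moreover have "open (A \<inter> B)" "e \<in> A \<inter> B" using AB by auto
  ultimately show ?thesis by blast
qed

lemma cube_nbhd:
  assumes "open W" "e \<in> W"
  shows "\<exists>W'. open W' \<and> e \<in> W' \<and> (\<forall>a\<in>W'. \<forall>b\<in>W'. \<forall>c\<in>W'. a * b * c \<in> W)"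
proof -
  obtain W1 where W1: "open W1" "e \<in> W1" "\<forall>a\<in>W1. \<forall>b\<in>W1. a * b \<in> W"
    using sq_nbhd[OF assms] by blast
  obtain W2 where W2: "open W2" "e \<in> W2" "\<forall>a\<in>W2. \<forall>b\<in>W2. a * b \<in> W1"
    using sq_nbhd[OF W1(1,2)] by blast
  have sub: "W2 \<subseteq> W1"
  proof
    fix a assume "a \<in> W2" then have "a * e \<in> W1" using W2 by blast
    then show "a \<in> W1" using runit by simp
  qed
  have "\<forall>a\<in>W2. \<forall>b\<in>W2. \<forall>c\<in>W2. a * b * c \<in> W"
  proof (intro ballI)
    fix a b c assume "a \<in> W2" "b \<in> W2" "c \<in> W2"
    then have "a * b \<in> W1" "c \<in> W1" using W2(3) sub by auto
    then show "a * b * c \<in> W" using W1(3) by blast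
  qed
  then show ?thesis using W2(1,2) by blast
qed

definition cubeok :: "'a set \<Rightarrow> 'a set \<Rightarrow> bool" where
  "cubeok W W' \<longleftrightarrow> open W' \<and> e \<in> W' \<and> (\<forall>a\<in>W'. \<forall>b\<in>W'. \<forall>c\<in>W'. a * b * c \<in> W)"

lemma exists_seq:
  assumes "open V0" "e \<in> V0"
  shows "\<exists>U. U 0 = V0 \<and> (\<forall>n. open (U n) \<and> e \<in> U n) \<and>
     (\<forall>n. \<forall>a\<in>U (Suc n). \<forall>b\<in>U (Suc n). \<forall>c\<in>U (Suc n). a * b * c \<in> U n)"
proof -
  have "\<exists>W'. open W \<and> e \<in> W \<longrightarrow> cubeok W W'" for W
  proof (cases "open W \<and> e \<in> W")
    case True
    then obtain W' where "cubeok W W'" using cube_nbhd unfolding cubeok_def by meson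
    then show ?thesis by blast
  qed blast
  then have "\<forall>W. \<exists>W'. open W \<and> e \<in> W \<longrightarrow> cubeok W W'" by blast
  then obtain f where f: "\<And>W. open W \<Longrightarrow> e \<in> W \<Longrightarrow> cubeok W (f W)"
    by metis
  define U where "U = (\<lambda>n. (f ^^ n) V0)"
  have U0: "U 0 = V0" and US: "\<And>n. U (Suc n) = f (U n)" unfolding U_def by simp_all
  have *: "open (U n) \<and> e \<in> U n" for n
  proof (induction n)
    case 0 then show ?case using assms U0 by simp
  next
    case (Suc n)
    then have "cubeok (U n) (U (Suc n))" using f US by simp
    then show ?case unfolding cubeok_def by blast
  qed
  have co: "cubeok (U n) (U (Suc n))" for n using f * US by simp
  have c: "\<forall>n. \<forall>a\<in>U (Suc n). \<forall>b\<in>U (Suc n). \<forall>c\<in>U (Suc n). a * b * c \<in> U n"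
    using co unfolding cubeok_def by blast
  have "\<forall>n. open (U n) \<and> e \<in> U n" using * by blast
  with U0 c have "U 0 = V0 \<and> (\<forall>n. open (U n) \<and> e \<in> U n) \<and>
     (\<forall>n. \<forall>a\<in>U (Suc n). \<forall>b\<in>U (Suc n). \<forall>c\<in>U (Suc n). a * b * c \<in> U n)"
    by simp
  then show ?thesis by - (rule exI[of _ U], assumption)
qed

end

locale useq = tsg e for e :: "'a::{topological_space,semigroup_mult}" +
  fixes U :: "nat \<Rightarrow> 'a set"
  assumes Uopen: "open (U n)" and eU: "e \<in> U n"
    and Ucube: "a \<in> U (Suc n) \<Longrightarrow> b \<in> U (Suc n) \<Longrightarrow> c \<in> U (Suc n) \<Longrightarrow> a * b * c \<in> U n"
begin

lemma Udec: "U (Suc n) \<subseteq> U n"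
proof
  fix a assume "a \<in> U (Suc n)"
  then have "a * e * e \<in> U n" using Ucube eU by blast
  then show "a \<in> U n" using runit by simp
qed

lemma Uanti: "n \<le> m \<Longrightarrow> U m \<subseteq> U n"
  by (rule lift_Suc_antimono_le[of U]) (use Udec in auto)

fun reach :: "'a \<Rightarrow> nat list \<Rightarrow> 'a set" where
  "reach x [] = {x}"
| "reach x (n # ns) = (\<Union>u\<in>U n. reach (x * u) ns)"

definition wt :: "nat list \<Rightarrow> real" where
  "wt ns = sum_list (map (\<lambda>n. (1/2::real)^n) ns)"

lemma wt_simps[simp]: "wt [] = 0" "wt (n # ns) = (1/2)^n + wt ns" "wt (as @ bs) = wt as + wt bs"
  by (simp_all add: wt_def)

lemma wt_nonneg: "0 \<le> wt ns"
  by (induction ns) auto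

lemma reach_append: "reach x (as @ bs) = (\<Union>w\<in>reach x as. reach w bs)"
  by (induction as arbitrary: x) auto

lemma reach_left: "reach (z * x) ns = (\<lambda>y. z * y) ` reach x ns"
  by (induction ns arbitrary: x) (auto simp: mult.assoc image_UN)

lemma reach_closure: "y \<in> closure T \<Longrightarrow> reach y bs \<subseteq> closure (\<Union>w\<in>T. reach w bs)"
proof (induction bs arbitrary: y T)
  case Nil
  then show ?case by simp
next
  case (Cons n bs)
  show ?case
  proof
    fix z assume "z \<in> reach y (n # bs)"
    then obtain u where u: "u \<in> U n" "z \<in> reach (y * u) bs" by auto
    have "y * u \<in> closure ((\<lambda>w. w * u) ` T)"
      using closure_img[OF contR Cons.prems] .
    then have "z \<in> closure (\<Union>w\<in>(\<lambda>w. w * u) ` T. reach w bs)" using Cons.IH u(2) by blast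
    moreover have "(\<Union>w\<in>(\<lambda>w. w * u) ` T. reach w bs) \<subseteq> (\<Union>w\<in>T. reach w (n # bs))"
      using u(1) by auto
    ultimately show "z \<in> closure (\<Union>w\<in>T. reach w (n # bs))"
      using closure_mono by blast
  qed
qed

lemma frink: "wt ns \<le> (1/2)^Suc m \<Longrightarrow> y \<in> reach x ns \<Longrightarrow> \<exists>u\<in>U m. y = x * u"
proof (induction "length ns" arbitrary: ns m x y rule: less_induct)
  case less
  show ?case
  proof (cases "ns = []")
    case True
    then have "y = x * e" using less.prems runit by simp
    then show ?thesis using eU by blast
  next
    case False
    define s where "s = wt ns"
    have s0: "0 \<le> s" unfolding s_def by (rule wt_nonneg)
    define J where "J = {j. j < length ns \<and> wt (take j ns) \<le> s / 2}"
    have J0: "0 \<in> J" using False s0 by (simp add: J_def)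
    have Jfin: "finite J" unfolding J_def by simp
    define j where "j = Max J"
    have jJ: "j \<in> J" unfolding j_def using J0 Jfin Max_in by blast
    then have jl: "j < length ns" and wtake: "wt (take j ns) \<le> s / 2" by (auto simp: J_def)
    have split: "ns = take j ns @ (ns ! j) # drop (Suc j) ns"
      using id_take_nth_drop[OF jl] .
    have wdrop: "wt (drop (Suc j) ns) \<le> s / 2"
    proof (cases "Suc j < length ns")
      case True
      have "Suc j \<notin> J"
      proof
        assume "Suc j \<in> J" then have "Suc j \<le> j" unfolding j_def using Jfin by simp
        then show False by simp
      qed
      then have "wt (take (Suc j) ns) > s / 2" using True by (auto simp: J_def)
      moreover have "s = wt (take (Suc j) ns) + wt (drop (Suc j) ns)"
        unfolding s_def by (metis append_take_drop_id wt_simps(3))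
      ultimately show ?thesis by simp
    next
      case False
      then have "drop (Suc j) ns = []" by simp
      then show ?thesis using s0 by simp
    qed
    have sdecomp: "s = wt (take j ns) + (1/2)^(ns ! j) + wt (drop (Suc j) ns)"
      unfolding s_def by (subst split) simp
    have hs: "s \<le> (1/2)^Suc m" using less.prems(1) s_def by simp
    have pj: "(1/2::real)^(ns ! j) \<le> (1/2)^Suc m"
      using sdecomp hs wt_nonneg[of "take j ns"] wt_nonneg[of "drop (Suc j) ns"] by linarith
    have "Suc m \<le> ns ! j"
    proof (rule ccontr)
      assume "\<not> Suc m \<le> ns ! j"
      then have "ns ! j < Suc m" by simp
      then have "(1/2::real)^(Suc m) < (1/2)^(ns ! j)"
        by (rule power_strict_decreasing) simp_all
      with pj show False by simp
    qed
    then have Ut: "U (ns ! j) \<subseteq> U (Suc m)" by (rule Uanti)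
    have "y \<in> reach x (take j ns @ (ns ! j) # drop (Suc j) ns)" using less.prems(2) split by simp
    then obtain v t where v: "v \<in> reach x (take j ns)" and t: "t \<in> U (ns ! j)"
      and y: "y \<in> reach (v * t) (drop (Suc j) ns)"
      by (auto simp: reach_append)
    have l1: "length (take j ns) < length ns" using jl by simp
    have w1: "wt (take j ns) \<le> (1/2)^Suc (Suc m)" using wtake hs by simp
    obtain a where a: "a \<in> U (Suc m)" "v = x * a" using less.hyps[OF l1 w1 v] by blast
    have l2: "length (drop (Suc j) ns) < length ns" using jl by simp
    have w2: "wt (drop (Suc j) ns) \<le> (1/2)^Suc (Suc m)" using wdrop hs by simp
    obtain b where b: "b \<in> U (Suc m)" "y = v * t * b" using less.hyps[OF l2 w2 y] by blast
    have "a * t * b \<in> U m" using Ucube a(1) b(1) t Ut by blast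
    moreover have "y = x * (a * t * b)" using a(2) b(2) by (simp add: mult.assoc)
    ultimately show ?thesis by blast
  qed
qed

definition R :: "'a \<Rightarrow> real \<Rightarrow> 'a set" where
  "R x r = (\<Union>ns\<in>{ns. wt ns \<le> r}. reach x ns)"

lemma R_mono: "r \<le> s \<Longrightarrow> R x r \<subseteq> R x s"
  unfolding R_def by (blast intro: order_trans)

lemma R_self: "0 \<le> r \<Longrightarrow> x \<in> R x r"
  unfolding R_def by (rule UN_I[of "[]"]) auto

lemma R_trans: "y \<in> R x r \<Longrightarrow> z \<in> R y s \<Longrightarrow> z \<in> R x (r + s)"
proof -
  assume "y \<in> R x r" "z \<in> R y s"
  then obtain as bs where "wt as \<le> r" "y \<in> reach x as" "wt bs \<le> s" "z \<in> reach y bs"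
    unfolding R_def by auto
  then have "wt (as @ bs) \<le> r + s" "z \<in> reach x (as @ bs)" by (auto simp: reach_append)
  then show ?thesis unfolding R_def by blast
qed

lemma R_left: "y \<in> R x r \<Longrightarrow> z * y \<in> R (z * x) r"
  unfolding R_def by (auto simp: reach_left)

lemma R_step: "u \<in> U n \<Longrightarrow> x * u \<in> R x ((1/2)^n)"
  unfolding R_def by (rule UN_I[of "[n]"]) auto

lemma R_small: "R x ((1/2)^Suc m) \<subseteq> (\<lambda>u. x * u) ` U m"
  unfolding R_def using frink by blast

lemma R_closure: "y \<in> closure (R x r) \<Longrightarrow> R y s \<subseteq> closure (R x (r + s))"
proof
  fix z assume y: "y \<in> closure (R x r)" and "z \<in> R y s"
  then obtain bs where bs: "wt bs \<le> s" "z \<in> reach y bs" unfolding R_def by auto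
  have "z \<in> closure (\<Union>w\<in>R x r. reach w bs)" using reach_closure[OF y] bs(2) by blast
  moreover have "(\<Union>w\<in>R x r. reach w bs) \<subseteq> R x (r + s)"
  proof
    fix v assume "v \<in> (\<Union>w\<in>R x r. reach w bs)"
    then obtain w where "w \<in> R x r" "v \<in> reach w bs" by auto
    moreover have "v \<in> R w s" using bs(1) \<open>v \<in> reach w bs\<close> unfolding R_def by blast
    ultimately show "v \<in> R x (r + s)" using R_trans by blast
  qed
  ultimately show "z \<in> closure (R x (r + s))" using closure_mono by blast
qed

definition goodcl :: "('a set \<Rightarrow> 'a set) \<Rightarrow> bool" where
  "goodcl cl \<longleftrightarrow> (\<forall>T. T \<subseteq> cl T) \<and> (\<forall>S T. S \<subseteq> T \<longrightarrow> cl S \<subseteq> cl T) \<and>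
     (\<forall>x y z r s. y \<in> cl (R x r) \<longrightarrow> z \<in> cl (R y s) \<longrightarrow> z \<in> cl (R x (r + s))) \<and>
     (\<forall>x y z r. y \<in> cl (R x r) \<longrightarrow> z * y \<in> cl (R (z * x) r))"

lemma goodcl_id: "goodcl id"
  unfolding goodcl_def using R_trans R_left by auto

lemma goodcl_closure: "goodcl closure"
  unfolding goodcl_def
proof (intro conjI allI impI)
  fix T :: "'a set" show "T \<subseteq> closure T" by (rule closure_subset)
next
  fix S T :: "'a set" assume "S \<subseteq> T" then show "closure S \<subseteq> closure T" by (rule closure_mono)
next
  fix x y z r s assume y: "y \<in> closure (R x r)" and z: "z \<in> closure (R y s)"
  have "closure (R y s) \<subseteq> closure (R x (r + s))"
    by (rule closure_minimal) (use R_closure[OF y] in auto)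
  then show "z \<in> closure (R x (r + s))" using z by blast
next
  fix x y z r assume y: "y \<in> closure (R x r)"
  have "z * y \<in> closure ((\<lambda>w. z * w) ` R x r)" by (rule closure_img[OF contL y])
  moreover have "(\<lambda>w. z * w) ` R x r \<subseteq> R (z * x) r" using R_left by blast
  ultimately show "z * y \<in> closure (R (z * x) r)" using closure_mono by blast
qed

definition Phi :: "('a set \<Rightarrow> 'a set) \<Rightarrow> 'a \<Rightarrow> 'a \<Rightarrow> real set" where
  "Phi cl x y = {r. 0 < r \<and> (1 \<le> r \<or> y \<in> cl (R x r))}"

definition qd :: "('a set \<Rightarrow> 'a set) \<Rightarrow> 'a \<Rightarrow> 'a \<Rightarrow> real" where
  "qd cl x y = Inf (Phi cl x y)"

lemma exists_small: "0 < (d::real) \<Longrightarrow> \<exists>n. (1/2::real)^n < d"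
  using real_arch_pow_inv[of d "1/2"] by simp

lemma nbhd_U: "is_nbhd (U n) e"
  unfolding is_nbhd_def using Uopen eU by blast

lemma nbhd_xU: "\<exists>S. open S \<and> x \<in> S \<and> S \<subseteq> (\<lambda>u. x * u) ` U n"
  using onbhd[OF nbhd_U, of x] unfolding is_nbhd_def by blast

context
  fixes cl assumes gc: "goodcl cl"
begin

lemma gc': "(\<forall>T. T \<subseteq> cl T) \<and> (\<forall>S T. S \<subseteq> T \<longrightarrow> cl S \<subseteq> cl T) \<and>
     (\<forall>x y z r s. y \<in> cl (R x r) \<longrightarrow> z \<in> cl (R y s) \<longrightarrow> z \<in> cl (R x (r + s))) \<and>
     (\<forall>x y z r. y \<in> cl (R x r) \<longrightarrow> z * y \<in> cl (R (z * x) r))"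
  using gc unfolding goodcl_def .

lemma cl_sub: "T \<subseteq> cl T"
  using gc' by (rule conjE) (erule allE)
lemma cl_mono: "S \<subseteq> T \<Longrightarrow> cl S \<subseteq> cl T"
proof -
  assume a: "S \<subseteq> T"
  have "\<forall>S T. S \<subseteq> T \<longrightarrow> cl S \<subseteq> cl T" using gc' by (elim conjE)
  then show ?thesis using a by (elim allE impE)
qed
lemma cl_trans: "y \<in> cl (R x r) \<Longrightarrow> z \<in> cl (R y s) \<Longrightarrow> z \<in> cl (R x (r + s))"
proof -
  assume a: "y \<in> cl (R x r)" "z \<in> cl (R y s)"
  have "\<forall>x y z r s. y \<in> cl (R x r) \<longrightarrow> z \<in> cl (R y s) \<longrightarrow> z \<in> cl (R x (r + s))"
    using gc' by (elim conjE)
  then show ?thesis using a by (elim allE impE)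
qed
lemma cl_left: "y \<in> cl (R x r) \<Longrightarrow> z * y \<in> cl (R (z * x) r)"
proof -
  assume a: "y \<in> cl (R x r)"
  have "\<forall>x y z r. y \<in> cl (R x r) \<longrightarrow> z * y \<in> cl (R (z * x) r)"
    using gc' by (elim conjE)
  then show ?thesis using a by (elim allE impE)
qed

lemma Phi_up: "r \<in> Phi cl x y \<Longrightarrow> r \<le> s \<Longrightarrow> s \<in> Phi cl x y"
  unfolding Phi_def using cl_mono[OF R_mono] by fastforce

lemma one_Phi: "1 \<in> Phi cl x y" unfolding Phi_def by simp

lemma Phi_ne: "Phi cl x y \<noteq> {}" using one_Phi by blast

lemma Phi_bdd: "bdd_below (Phi cl x y)"
  unfolding Phi_def by (rule bdd_belowI[of _ 0]) auto

lemma qd_le: "r \<in> Phi cl x y \<Longrightarrow> qd cl x y \<le> r"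
  unfolding qd_def by (rule cInf_lower[OF _ Phi_bdd])

lemma qd_nonneg: "0 \<le> qd cl x y"
  unfolding qd_def by (rule cInf_greatest[OF Phi_ne]) (auto simp: Phi_def)

lemma qd_le1: "qd cl x y \<le> 1" by (rule qd_le[OF one_Phi])

lemma qd_lt: "qd cl x y < r \<Longrightarrow> r \<in> Phi cl x y"
proof -
  assume "qd cl x y < r"
  then obtain r' where "r' \<in> Phi cl x y" "r' < r"
    unfolding qd_def using cInf_lessD[OF Phi_ne] by blast
  then show ?thesis using Phi_up by simp
qed

lemma qd_self: "qd cl x x = 0"
proof -
  have "qd cl x x \<le> 0 + d" if "0 < d" for d
  proof -
    have "x \<in> cl (R x d)" using cl_sub R_self that by fastforce
    then have "d \<in> Phi cl x x" using that unfolding Phi_def by simp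
    then show ?thesis using qd_le by simp
  qed
  then have "qd cl x x \<le> 0" by (rule field_le_epsilon)
  then show ?thesis using qd_nonneg by (simp add: antisym)
qed

lemma Phi_add: "r \<in> Phi cl x y \<Longrightarrow> s \<in> Phi cl y z \<Longrightarrow> r + s \<in> Phi cl x z"
  unfolding Phi_def using cl_trans by auto

lemma qd_tri: "qd cl x z \<le> qd cl x y + qd cl y z"
proof (rule field_le_epsilon)
  fix d :: real assume d: "0 < d"
  have "qd cl x y + d/2 \<in> Phi cl x y" by (rule qd_lt) (use d in simp)
  moreover have "qd cl y z + d/2 \<in> Phi cl y z" by (rule qd_lt) (use d in simp)
  ultimately have "(qd cl x y + d/2) + (qd cl y z + d/2) \<in> Phi cl x z" by (rule Phi_add)
  then have "qd cl x z \<le> (qd cl x y + d/2) + (qd cl y z + d/2)" by (rule qd_le)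
  then show "qd cl x z \<le> qd cl x y + qd cl y z + d" by simp
qed

lemma qd_left: "qd cl (z * x) (z * y) \<le> qd cl x y"
proof -
  have "Phi cl x y \<subseteq> Phi cl (z * x) (z * y)"
    unfolding Phi_def using cl_left by auto
  then show ?thesis unfolding qd_def by (rule cInf_superset_mono[OF Phi_ne Phi_bdd])
qed

lemma qd_step: "u \<in> U n \<Longrightarrow> qd cl y (y * u) \<le> (1/2)^n"
proof -
  assume "u \<in> U n"
  then have "y * u \<in> cl (R y ((1/2)^n))" using R_step cl_sub by blast
  then have "(1/2)^n \<in> Phi cl y (y * u)" unfolding Phi_def by simp
  then show ?thesis by (rule qd_le)
qed

lemma qd_step2: "u \<in> U n \<Longrightarrow> qd cl x (y * u) \<le> qd cl x y + (1/2)^n"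
  using qd_tri[of x "y * u" y] qd_step[of u n y] by simp

lemma qd_small: "qd cl x y < (1/2)^Suc m \<Longrightarrow> y \<in> cl ((\<lambda>u. x * u) ` U m)"
proof -
  assume "qd cl x y < (1/2)^Suc m"
  then have "(1/2)^Suc m \<in> Phi cl x y" by (rule qd_lt)
  moreover have "(1/2::real)^m \<le> 1" by (rule power_le_one) auto
  then have "\<not> 1 \<le> (1/2::real)^Suc m" by simp
  ultimately have "y \<in> cl (R x ((1/2)^Suc m))" unfolding Phi_def by simp
  then show ?thesis using cl_mono[OF R_small] by blast
qed

lemma qball_open: "open (qball (qd cl) x r)"
proof (subst open_subopen, intro ballI)
  fix y assume "y \<in> qball (qd cl) x r"
  then have "0 < r - qd cl x y" by (simp add: qball_def)
  then obtain n where n: "(1/2)^n < r - qd cl x y" using exists_small by blast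
  obtain S where S: "open S" "y \<in> S" "S \<subseteq> (\<lambda>u. y * u) ` U n" using nbhd_xU by blast
  have "S \<subseteq> qball (qd cl) x r"
  proof
    fix w assume "w \<in> S"
    then have "w \<in> (\<lambda>u. y * u) ` U n" using S(3) by (rule subsetD[rotated])
    then obtain u where u: "u \<in> U n" and wu: "w = y * u" by (rule imageE)
    have "qd cl x w \<le> qd cl x y + (1/2)^n" unfolding wu by (rule qd_step2[OF u])
    then have "qd cl x w < r" using n by linarith
    then show "w \<in> qball (qd cl) x r" by (simp add: qball_def)
  qed
  then show "\<exists>T. open T \<and> y \<in> T \<and> T \<subseteq> qball (qd cl) x r" using S(1,2) by (intro exI[of _ S] conjI)
qed

lemma qbs_mono: "r \<le> s \<Longrightarrow> qball_set (qd cl) A r \<subseteq> qball_set (qd cl) A s"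
  unfolding qball_set_def by (auto intro: less_le_trans)

lemma cd_cont:
  assumes A: "A \<noteq> {}"
  shows "continuous_on UNIV (closure_dist (qd cl) A)"
proof (rule cont_from_semi)
  define Q where "Q x = {r. r > 0 \<and> x \<in> closure (qball_set (qd cl) A r)}" for x
  have g: "closure_dist (qd cl) A x = Inf (Q x)" for x
    unfolding closure_dist_def Q_def ..
  obtain a0 where a0: "a0 \<in> A" using A by blast
  have twoQ: "2 \<in> Q x" for x
  proof -
    have "qd cl a0 x < 2" using qd_le1[of a0 x] by simp
    then have "x \<in> qball_set (qd cl) A 2" using a0 unfolding qball_set_def by blast
    then show ?thesis unfolding Q_def using closure_subset by fastforce
  qed
  have Qne: "Q x \<noteq> {}" for x using twoQ by blast
  have Qbdd: "bdd_below (Q x)" for x unfolding Q_def by (rule bdd_belowI[of _ 0]) auto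
  have gnn: "0 \<le> Inf (Q x)" for x by (rule cInf_greatest[OF Qne]) (auto simp: Q_def)
  show "\<exists>S. open S \<and> x \<in> S \<and> (\<forall>y\<in>S. a < closure_dist (qd cl) A y)"
    if ax: "a < closure_dist (qd cl) A x" for x a
  proof (cases "a < 0")
    case True
    then show ?thesis using gnn g by (intro exI[of _ UNIV]) (auto intro: less_le_trans)
  next
    case False
    define c where "c = (a + Inf (Q x)) / 2"
    have c: "a < c" "c < Inf (Q x)" "0 < c" using ax False g unfolding c_def by auto
    have "c \<notin> Q x"
    proof
      assume "c \<in> Q x"
      then have "Inf (Q x) \<le> c" by (rule cInf_lower[OF _ Qbdd])
      then show False using c by simp
    qed
    then have nx: "x \<notin> closure (qball_set (qd cl) A c)" using c(3) unfolding Q_def by simp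
    define S where "S = - closure (qball_set (qd cl) A c)"
    have "open S" unfolding S_def by auto
    moreover have "x \<in> S" using nx unfolding S_def by simp
    moreover have "a < closure_dist (qd cl) A y" if "y \<in> S" for y
    proof -
      have "c \<le> Inf (Q y)"
      proof (rule cInf_greatest[OF Qne])
        fix r assume r: "r \<in> Q y"
        show "c \<le> r"
        proof (rule ccontr)
          assume "\<not> c \<le> r"
          then have "closure (qball_set (qd cl) A r) \<subseteq> closure (qball_set (qd cl) A c)"
            by (intro closure_mono qbs_mono) simp
          then show False using r that unfolding Q_def S_def by auto
        qed
      qed
      then show ?thesis using c g by simp
    qed
    ultimately show ?thesis by (intro exI[of _ S]) blast
  qed
  show "\<exists>S. open S \<and> x \<in> S \<and> (\<forall>y\<in>S. closure_dist (qd cl) A y < a)"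
    if xa: "closure_dist (qd cl) A x < a" for x a
  proof -
    obtain r where r: "r \<in> Q x" "r < a" using xa g cInf_lessD[OF Qne] by metis
    then obtain n where n: "(1/2)^n < a - r" using exists_small[of "a - r"] by auto
    obtain S where S: "open S" "x \<in> S" "S \<subseteq> (\<lambda>u. x * u) ` U n" using nbhd_xU by blast
    have "closure_dist (qd cl) A y < a" if "y \<in> S" for y
    proof -
      have "y \<in> (\<lambda>u. x * u) ` U n" using S(3) that by blast
      then obtain u where u: "u \<in> U n" and yu: "y = x * u" by (rule imageE)
      have xcl: "x \<in> closure (qball_set (qd cl) A r)" and r0: "0 < r" using r(1) unfolding Q_def by auto
      have "x * u \<in> closure ((\<lambda>b. b * u) ` qball_set (qd cl) A r)"
        by (rule closure_img[OF contR xcl])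
      moreover have "(\<lambda>b. b * u) ` qball_set (qd cl) A r \<subseteq> qball_set (qd cl) A (r + (1/2)^n)"
      proof
        fix w assume "w \<in> (\<lambda>b. b * u) ` qball_set (qd cl) A r"
        then obtain b where b: "b \<in> qball_set (qd cl) A r" and wb: "w = b * u" by (rule imageE)
        then obtain a' where a': "a' \<in> A" "qd cl a' b < r" unfolding qball_set_def by blast
        have "qd cl a' (b * u) \<le> qd cl a' b + (1/2)^n" by (rule qd_step2[OF u])
        then have "qd cl a' w < r + (1/2)^n" using a'(2) wb by simp
        then show "w \<in> qball_set (qd cl) A (r + (1/2)^n)" using a'(1) unfolding qball_set_def by blast
      qed
      ultimately have "y \<in> closure (qball_set (qd cl) A (r + (1/2)^n))"
        using yu closure_mono by blast
      then have "r + (1/2)^n \<in> Q y" using r0 unfolding Q_def by (simp add: add_pos_nonneg)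
      then have "Inf (Q y) \<le> r + (1/2)^n" by (rule cInf_lower[OF _ Qbdd])
      then show ?thesis using g n by simp
    qed
    then show ?thesis using S(1,2) by (intro exI[of _ S]) blast
  qed
qed

end

lemma qd_rcont: "continuous_on UNIV (qd closure x)"
proof (rule cont_from_semi)
  note gc = goodcl_closure
  show "\<exists>S. open S \<and> y \<in> S \<and> (\<forall>w\<in>S. qd closure x w < a)"
    if ya: "qd closure x y < a" for y a
  proof -
    obtain n where n: "(1/2)^n < a - qd closure x y" using exists_small[of "a - qd closure x y"] ya by auto
    obtain S where S: "open S" "y \<in> S" "S \<subseteq> (\<lambda>u. y * u) ` U n" using nbhd_xU by blast
    have "qd closure x w < a" if "w \<in> S" for w
    proof -
      have "w \<in> (\<lambda>u. y * u) ` U n" using S(3) that by blast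
      then obtain u where u: "u \<in> U n" and wu: "w = y * u" by (rule imageE)
      have "qd closure x w \<le> qd closure x y + (1/2)^n" unfolding wu by (rule qd_step2[OF gc u])
      then show ?thesis using n by linarith
    qed
    then show ?thesis using S(1,2) by (intro exI[of _ S]) blast
  qed
  show "\<exists>S. open S \<and> y \<in> S \<and> (\<forall>w\<in>S. a < qd closure x w)"
    if ay: "a < qd closure x y" for y a
  proof (cases "a < 0")
    case True
    then show ?thesis using qd_nonneg[OF gc] by (intro exI[of _ UNIV]) (auto intro: less_le_trans)
  next
    case False
    define r where "r = (a + qd closure x y) / 2"
    have r: "a < r" "r < qd closure x y" "0 < r" using ay False unfolding r_def by auto
    have r1: "\<not> 1 \<le> r" using r(2) qd_le1[OF gc, of x y] by simp
    have "r \<notin> Phi closure x y"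
    proof
      assume "r \<in> Phi closure x y"
      then have "qd closure x y \<le> r" by (rule qd_le[OF gc])
      then show False using r by simp
    qed
    then have ny: "y \<notin> closure (R x r)" using r(3) unfolding Phi_def by simp
    define S where "S = - closure (R x r)"
    have "open S" unfolding S_def by auto
    moreover have "y \<in> S" using ny unfolding S_def by simp
    moreover have "a < qd closure x w" if "w \<in> S" for w
    proof -
      have "r \<le> qd closure x w"
        unfolding qd_def
      proof (rule cInf_greatest[OF Phi_ne[OF gc]])
        fix r' assume r': "r' \<in> Phi closure x w"
        show "r \<le> r'"
        proof (rule ccontr)
          assume "\<not> r \<le> r'"
          then have "r \<in> Phi closure x w" using Phi_up[OF gc r'] by simp
          then show False using r1 that unfolding Phi_def S_def by auto
        qed
      qed
      then show ?thesis using r by simp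
    qed
    ultimately show ?thesis by (intro exI[of _ S]) blast
  qed
qed

lemma qd_props:
  assumes gc: "goodcl cl"
  shows "quasi_pseudometric (qd cl) \<and> left_subinvariant (qd cl) \<and> closure_dist_continuous (qd cl)"
proof (intro conjI)
  show "quasi_pseudometric (qd cl)"
    unfolding quasi_pseudometric_def using qd_nonneg[OF gc] qd_self[OF gc] qd_tri[OF gc] by blast
  show "left_subinvariant (qd cl)"
    unfolding left_subinvariant_def using qd_left[OF gc] by blast
  show "closure_dist_continuous (qd cl)"
    unfolding closure_dist_continuous_def using cd_cont[OF gc] by blast
qed

lemma qd_ball_half:
  assumes gc: "goodcl cl" and "qd cl x y < 1/2"
  shows "y \<in> cl ((\<lambda>u. x * u) ` U 0)"
  using qd_small[OF gc, of x y 0] assms(2) by simp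

end

lemma gen_lemma:
  fixes D :: "('a::topological_space \<Rightarrow> 'a \<Rightarrow> real) set"
  assumes op: "\<And>d x r. d \<in> D \<Longrightarrow> open (qball d x r)"
    and self: "\<And>d x. d \<in> D \<Longrightarrow> d x x = 0"
    and small: "\<And>x W. open W \<Longrightarrow> x \<in> W \<Longrightarrow> \<exists>d\<in>D. \<exists>r>0. qball d x r \<subseteq> W"
  shows "generates_topology D"
  unfolding generates_topology_def
proof (intro allI iffI)
  fix W :: "'a set"
  assume W: "open W"
  let ?S = "{qball d x \<epsilon> | d x \<epsilon>. d \<in> D \<and> \<epsilon> > 0}"
  have eq: "W = \<Union>{b \<in> ?S. b \<subseteq> W}"
  proof
    show "W \<subseteq> \<Union>{b \<in> ?S. b \<subseteq> W}"
    proof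
      fix x assume "x \<in> W"
      then obtain d r where d: "d \<in> D" "r > 0" "qball d x r \<subseteq> W" using small W by blast
      then have "x \<in> qball d x r" using self[OF d(1)] by (simp add: qball_def)
      moreover have "qball d x r \<in> {b \<in> ?S. b \<subseteq> W}" using d by blast
      ultimately show "x \<in> \<Union>{b \<in> ?S. b \<subseteq> W}" by blast
    qed
  qed blast
  have "generate_topology ?S (\<Union>{b \<in> ?S. b \<subseteq> W})"
    by (rule generate_topology.UN) (auto intro: generate_topology.Basis)
  then show "generate_topology ?S W" using eq by simp
next
  fix W :: "'a set"
  assume "generate_topology {qball d x \<epsilon> | d x \<epsilon>. d \<in> D \<and> \<epsilon> > 0} W"
  then show "open W"
    by induction (auto intro: op)
qed

theorem corollary6p2:
  fixes e :: "'a::{topological_space,semigroup_mult}"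
  assumes "topological_semigroup TYPE('a)"
    and "open_right_unit e"
  shows "(\<exists>D :: ('a \<Rightarrow> 'a \<Rightarrow> real) set.
            (\<forall>d\<in>D. quasi_pseudometric d \<and> left_subinvariant d \<and> closure_dist_continuous d)
            \<and> generates_topology D \<and> card_le_character D TYPE('a))
       \<and> (semiregular TYPE('a) \<longrightarrow>
           (\<exists>D :: ('a \<Rightarrow> 'a \<Rightarrow> real) set.
            (\<forall>d\<in>D. quasi_pseudometric d \<and> left_subinvariant d \<and> closure_dist_continuous d
                    \<and> right_continuous d)
            \<and> generates_topology D \<and> card_le_character D TYPE('a)))"
proof -
  have T: "tsg e"
  proof
    show "continuous_on UNIV (\<lambda>p::'a \<times> 'a. fst p * snd p)"
      using assms(1) unfolding topological_semigroup_def .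
    show "x * e = x" for x using assms(2) unfolding open_right_unit_def by blast
    show "is_nbhd ((\<lambda>v. x * v) ` V) x" if "is_nbhd V e" for V x
      using assms(2) that unfolding open_right_unit_def by blast
  qed
  define NB where "NB = {B. nbhd_base e B}"
  have "{V. is_nbhd V e} \<in> NB" unfolding NB_def nbhd_base_def by blast
  then obtain B0 where B0: "B0 \<in> NB" and B0min: "\<And>B. (B, B0) \<in> inv_image ordLess card_of \<Longrightarrow> B \<notin> NB"
    using wfE_min[OF wf_inv_image[OF wf_ordLess]] by metis
  have B0le: "(card_of B0, card_of B) \<in> ordLeq" if "B \<in> NB" for B
  proof -
    have "(card_of B, card_of B0) \<in> ordLess \<or> (card_of B0, card_of B) \<in> ordLeq"
      by (rule ordLess_or_ordLeq[OF card_of_Well_order card_of_Well_order])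
    then show ?thesis using B0min[of B] that by auto
  qed
  have B0base: "nbhd_base e B0" using B0 unfolding NB_def by simp
  have cardD: "card_le_character (f ` B0) TYPE('a)" for f :: "'a set \<Rightarrow> 'a \<Rightarrow> 'a \<Rightarrow> real"
    unfolding card_le_character_def
  proof (intro allI impI)
    fix K :: "'a set set"
    assume "\<forall>x::'a. \<exists>B. nbhd_base x B \<and> (card_of B, card_of K) \<in> ordLeq"
    then have "\<exists>B. nbhd_base e B \<and> (card_of B, card_of K) \<in> ordLeq" by (rule spec)
    then obtain B where B: "nbhd_base e B" "(card_of B, card_of K) \<in> ordLeq" by (elim exE conjE)
    have "(card_of (f ` B0), card_of B0) \<in> ordLeq" by (rule card_of_image)
    also have "(card_of B0, card_of B) \<in> ordLeq" using B0le B(1) unfolding NB_def by blast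
    also note B(2)
    finally show "(card_of (f ` B0), card_of K) \<in> ordLeq" .
  qed
  have seqex: "\<exists>U. useq e U \<and> U 0 \<subseteq> V" if "is_nbhd V e" for V
  proof -
    have "open (interior V)" "e \<in> interior V"
      using that unfolding is_nbhd_def by (auto simp: interior_def)
    then obtain U where U: "U 0 = interior V" "\<forall>n. open (U n) \<and> e \<in> U n"
      "\<forall>n. \<forall>a\<in>U (Suc n). \<forall>b\<in>U (Suc n). \<forall>c\<in>U (Suc n). a * b * c \<in> U n"
      using tsg.exists_seq[OF T] by metis
    have "useq e U"
      by (intro useq.intro T useq_axioms.intro) (use U in auto)
    moreover have "U 0 \<subseteq> V" using U(1) interior_subset by blast
    ultimately show ?thesis by (intro exI[of _ U] conjI)
  qed
  define SU where "SU V = (SOME U. useq e U \<and> U 0 \<subseteq> V)" for V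
  have SU: "useq e (SU V) \<and> SU V 0 \<subseteq> V" if "V \<in> B0" for V
  proof -
    have "is_nbhd V e" using B0base that unfolding nbhd_base_def by blast
    then show ?thesis unfolding SU_def by (rule someI_ex[of "\<lambda>U. useq e U \<and> U 0 \<subseteq> V", OF seqex])
  qed
  have smallV: "\<exists>V\<in>B0. V \<subseteq> {v. x * v \<in> W}" if "open W" "x \<in> W" for x W
  proof -
    have "open {v. x * v \<in> W}" by (rule tsg.open_preL[OF T that(1)])
    moreover have "e \<in> {v. x * v \<in> W}" using that(2) tsg.runit[OF T] by simp
    ultimately have "is_nbhd {v. x * v \<in> W} e" unfolding is_nbhd_def by blast
    then show ?thesis using B0base unfolding nbhd_base_def by blast
  qed
  show ?thesis
  proof (intro conjI impI)
    define D where "D = (\<lambda>V. useq.qd (SU V) id) ` B0"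
    show "\<exists>D :: ('a \<Rightarrow> 'a \<Rightarrow> real) set.
            (\<forall>d\<in>D. quasi_pseudometric d \<and> left_subinvariant d \<and> closure_dist_continuous d)
            \<and> generates_topology D \<and> card_le_character D TYPE('a)"
    proof (intro exI[of _ D] conjI)
      show "\<forall>d\<in>D. quasi_pseudometric d \<and> left_subinvariant d \<and> closure_dist_continuous d"
        unfolding D_def using SU useq.qd_props useq.goodcl_id by blast
      show "card_le_character D TYPE('a)" unfolding D_def by (rule cardD)
      show "generates_topology D"
      proof (rule gen_lemma)
        fix d and x :: 'a and r assume "d \<in> D"
        then show "open (qball d x r)" unfolding D_def using SU useq.qball_open useq.goodcl_id by blast
      next
        fix d and x :: 'a assume "d \<in> D"
        then show "d x x = 0" unfolding D_def using SU useq.qd_self useq.goodcl_id by blast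
      next
        fix x :: 'a and W assume W: "open W" "x \<in> W"
        obtain V where V: "V \<in> B0" "V \<subseteq> {v. x * v \<in> W}" using smallV[OF W] by blast
        have uV: "useq e (SU V)" and sV: "SU V 0 \<subseteq> V" using SU[OF V(1)] by auto
        have "qball (useq.qd (SU V) id) x (1/2) \<subseteq> W"
        proof
          fix y assume "y \<in> qball (useq.qd (SU V) id) x (1/2)"
          then have "useq.qd (SU V) id x y < 1/2" by (simp add: qball_def)
          then have "y \<in> (\<lambda>u. x * u) ` SU V 0"
            using useq.qd_ball_half[OF uV useq.goodcl_id[OF uV]] by simp
          then show "y \<in> W" using sV V(2) by blast
        qed
        moreover have "useq.qd (SU V) id \<in> D" unfolding D_def using V(1) by blast
        ultimately show "\<exists>d\<in>D. \<exists>r>0. qball d x r \<subseteq> W" by (intro bexI[of _ "useq.qd (SU V) id"] exI[of _ "1/2"]) auto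
      qed
    qed
  next
    assume sr: "semiregular TYPE('a)"
    define D where "D = (\<lambda>V. useq.qd (SU V) closure) ` B0"
    show "\<exists>D :: ('a \<Rightarrow> 'a \<Rightarrow> real) set.
            (\<forall>d\<in>D. quasi_pseudometric d \<and> left_subinvariant d \<and> closure_dist_continuous d
                    \<and> right_continuous d)
            \<and> generates_topology D \<and> card_le_character D TYPE('a)"
    proof (intro exI[of _ D] conjI)
      show "\<forall>d\<in>D. quasi_pseudometric d \<and> left_subinvariant d \<and> closure_dist_continuous d
                    \<and> right_continuous d"
        unfolding D_def right_continuous_def using SU useq.qd_props useq.goodcl_closure useq.qd_rcont by blast
      show "card_le_character D TYPE('a)" unfolding D_def by (rule cardD)
      show "generates_topology D"
      proof (rule gen_lemma)
        fix d and x :: 'a and r assume "d \<in> D"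
        then show "open (qball d x r)" unfolding D_def using SU useq.qball_open useq.goodcl_closure by blast
      next
        fix d and x :: 'a assume "d \<in> D"
        then show "d x x = 0" unfolding D_def using SU useq.qd_self useq.goodcl_closure by blast
      next
        fix x :: 'a and W assume W: "open W" "x \<in> W"
        then have "is_nbhd W x" unfolding is_nbhd_def by blast
        then obtain N where N: "is_nbhd N x" "interior (closure N) \<subseteq> W"
          using sr unfolding semiregular_def by blast
        then obtain N' where N': "open N'" "x \<in> N'" "N' \<subseteq> N" unfolding is_nbhd_def by blast
        obtain V where V: "V \<in> B0" "V \<subseteq> {v. x * v \<in> N'}" using smallV[OF N'(1,2)] by blast
        have uV: "useq e (SU V)" and sV: "SU V 0 \<subseteq> V" using SU[OF V(1)] by auto
        have sub: "(\<lambda>u. x * u) ` SU V 0 \<subseteq> N" using sV V(2) N'(3) by blast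
        have "qball (useq.qd (SU V) closure) x (1/2) \<subseteq> closure N"
        proof
          fix y assume "y \<in> qball (useq.qd (SU V) closure) x (1/2)"
          then have "useq.qd (SU V) closure x y < 1/2" by (simp add: qball_def)
          then have "y \<in> closure ((\<lambda>u. x * u) ` SU V 0)"
            by (rule useq.qd_ball_half[OF uV useq.goodcl_closure[OF uV]])
          then show "y \<in> closure N" using closure_mono[OF sub] by blast
        qed
        then have "qball (useq.qd (SU V) closure) x (1/2) \<subseteq> interior (closure N)"
          by (rule interior_maximal) (rule useq.qball_open[OF uV useq.goodcl_closure[OF uV]])
        then have "qball (useq.qd (SU V) closure) x (1/2) \<subseteq> W" using N(2) by blast
        moreover have "useq.qd (SU V) closure \<in> D" unfolding D_def using V(1) by blast
        ultimately show "\<exists>d\<in>D. \<exists>r>0. qball d x r \<subseteq> W" by (intro bexI[of _ "useq.qd (SU V) closure"] exI[of _ "1/2"]) auto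
      qed
    qed
  qed
qed

end
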